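(* Let $G=(V,D,B)$ be a mixed graph, $v\in V$, and $A\subseteq V\setminus(\{v\}\cup\mathrm{sib}(v))$. There exists a set $Y\subseteq A$ satisfying the half-trek criterion with respect to $v$ if and only if the maximum flow in the network $G_{\mathrm{flow}}(v,A)$ has size $|\mathrm{pa}(v)|$.
   Context: A mixed graph is $G=(V,D,B)$ with $V=[m]$, $D$ directed edges $v\to w$, $B$ symmetric bidirected edges $v\leftrightarrow w$, no self-loops. $\mathrm{pa}(v)=\{w:w\to v\in D\}$, $\mathrm{sib}(v)=\{w:w\leftrightarrow v\in B\}$. A half-trek from $y$ to $w$ is a path $y\leftrightarrow w_0\to w_1\to\cdots\to w_r=w$ (left side $\{y\}$, right side $\{w_0,\dots,w_r\}$) or $y\to w_1\to\cdots\to w_r=w$, $r\ge0$ (left side $\{y\}$, right side $\{y,w_1,\dots,w_r\}$); nodes may repeat. A system of half-treks from $X$ to $Y$: half-treks with distinct sources forming $X$ and distinct targets forming $Y$; no sided intersection: pairwise disjoint left sides and pairwise disjoint right sides. $Y$ satisfies the half-trek criterion w.r.t. $v$ if $|Y|=|\mathrm{pa}(v)|$, $Y\cap(\{v\}\cup\mathrm{sib}(v))=\emptyset$, and there is a system of half-treks with no sided intersection from $Y$ to $\mathrm{pa}(v)$. Flows: given a directed graph with source $s$, sink $t$, node capacities $c_V\ge0$ and edge capacities $c_D\ge0$, a flow is $f:\text{edges}\to\mathbb{R}_{\ge0}$ with $f(e)\le c_D(e)$ for all edges and, for every node $x\ne s,t$, $\sum_u f(u,x)=\sum_w f(x,w)\le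 c_V(x)$; its size is $|f|=\sum_w f(s,w)$. The network $G_{\mathrm{flow}}(v,A)$ has nodes $s,t$, a node $L(a)$ for each $a\in A$, and a node $R(w)$ for each $w\in V$; its edges are $s\to L(a)$ and $L(a)\to R(a)$ for each $a\in A$, $L(a)\to R(w)$ for each $a\in A$ and $w$ with $a\leftrightarrow w\in B$, $R(w)\to R(u)$ for each $w\to u\in D$, and $R(w)\to t$ for each $w\in\mathrm{pa}(v)$. All edges and the nodes $s,t$ have capacity $\infty$; all other nodes have capacity $1$. *)

theory Defs
  imports Complex_Main "HOL-Library.Extended_Real"
begin

text \<open>Vertex set V = [m] = {1..m}; D directed edges (v,w) meaning v -> w;
  B bidirected edges, stored as a symmetric relation.\<close>

definition verts :: "nat \<Rightarrow> nat set" where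
  "verts m = {1..m}"

definition mixed_graph :: "nat \<Rightarrow> (nat \<times> nat) set \<Rightarrow> (nat \<times> nat) set \<Rightarrow> bool" where
  "mixed_graph m D B \<longleftrightarrow>
     D \<subseteq> verts m \<times> verts m \<and> B \<subseteq> verts m \<times> verts m \<and> sym B \<and>
     (\<forall>x. (x, x) \<notin> D \<and> (x, x) \<notin> B)"

definition pa :: "(nat \<times> nat) set \<Rightarrow> nat \<Rightarrow> nat set" where
  "pa D v = {w. (w, v) \<in> D}"

definition sib :: "(nat \<times> nat) set \<Rightarrow> nat \<Rightarrow> nat set" where
  "sib B v = {w. (w, v) \<in> B}"

text \<open>A half-trek with source y is encoded as a pair (bid, ws):
  if bid, it is y <-> w0 -> w1 -> ... -> wr with ws = [w0,...,wr];
  if not bid, it is y -> w1 -> ... -> wr with ws = [y,w1,...,wr] (r >= 0).\<close>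

definition half_trek ::
  "(nat \<times> nat) set \<Rightarrow> (nat \<times> nat) set \<Rightarrow> nat \<Rightarrow> nat \<Rightarrow> bool \<times> nat list \<Rightarrow> bool" where
  "half_trek D B y w p \<longleftrightarrow>
     (let bid = fst p; ws = snd p in
       ws \<noteq> [] \<and> last ws = w \<and> successively (\<lambda>a b. (a, b) \<in> D) ws \<and>
       (if bid then (y, hd ws) \<in> B else hd ws = y))"

definition left_side :: "nat \<Rightarrow> bool \<times> nat list \<Rightarrow> nat set" where
  "left_side y p = {y}"

definition right_side :: "bool \<times> nat list \<Rightarrow> nat set" where
  "right_side p = set (snd p)"

definition htsystem_no_sided_int ::
  "(nat \<times> nat) set \<Rightarrow> (nat \<times> nat) set \<Rightarrow> nat set \<Rightarrow> nat set \<Rightarrow> bool" where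
  "htsystem_no_sided_int D B X Y \<longleftrightarrow>
     (\<exists>\<sigma> P. bij_betw \<sigma> X Y \<and> (\<forall>x\<in>X. half_trek D B x (\<sigma> x) (P x)) \<and>
        (\<forall>x\<in>X. \<forall>x'\<in>X. x \<noteq> x' \<longrightarrow>
            left_side x (P x) \<inter> left_side x' (P x') = {} \<and>
            right_side (P x) \<inter> right_side (P x') = {}))"

definition HTC :: "(nat \<times> nat) set \<Rightarrow> (nat \<times> nat) set \<Rightarrow> nat \<Rightarrow> nat set \<Rightarrow> bool" where
  "HTC D B v Y \<longleftrightarrow>
     finite Y \<and> card Y = card (pa D v) \<and> Y \<inter> ({v} \<union> sib B v) = {} \<and>
     htsystem_no_sided_int D B Y (pa D v)"

text \<open>A flow assigns a value f e to each edge e \<in> E (values off E are irrelevant).\<close>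

definition inflow :: "'n set \<Rightarrow> ('n \<times> 'n) set \<Rightarrow> ('n \<times> 'n \<Rightarrow> real) \<Rightarrow> 'n \<Rightarrow> real" where
  "inflow N E f x = (\<Sum>u\<in>{u\<in>N. (u, x) \<in> E}. f (u, x))"

definition outflow :: "'n set \<Rightarrow> ('n \<times> 'n) set \<Rightarrow> ('n \<times> 'n \<Rightarrow> real) \<Rightarrow> 'n \<Rightarrow> real" where
  "outflow N E f x = (\<Sum>w\<in>{w\<in>N. (x, w) \<in> E}. f (x, w))"

definition is_flow ::
  "'n set \<Rightarrow> ('n \<times> 'n) set \<Rightarrow> 'n \<Rightarrow> 'n \<Rightarrow> ('n \<Rightarrow> ereal) \<Rightarrow> ('n \<times> 'n \<Rightarrow> ereal)
     \<Rightarrow> ('n \<times> 'n \<Rightarrow> real) \<Rightarrow> bool" where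
  "is_flow N E s t cV cD f \<longleftrightarrow>
     (\<forall>e\<in>E. 0 \<le> f e \<and> ereal (f e) \<le> cD e) \<and>
     (\<forall>x\<in>N - {s, t}. inflow N E f x = outflow N E f x \<and> ereal (inflow N E f x) \<le> cV x)"

definition flow_size :: "'n set \<Rightarrow> ('n \<times> 'n) set \<Rightarrow> 'n \<Rightarrow> ('n \<times> 'n \<Rightarrow> real) \<Rightarrow> real" where
  "flow_size N E s f = outflow N E f s"

definition max_flow_size ::
  "'n set \<Rightarrow> ('n \<times> 'n) set \<Rightarrow> 'n \<Rightarrow> 'n \<Rightarrow> ('n \<Rightarrow> ereal) \<Rightarrow> ('n \<times> 'n \<Rightarrow> ereal) \<Rightarrow> real \<Rightarrow> bool" where
  "max_flow_size N E s t cV cD k \<longleftrightarrow>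
     (\<exists>f. is_flow N E s t cV cD f \<and> flow_size N E s f = k) \<and>
     (\<forall>f. is_flow N E s t cV cD f \<longrightarrow> flow_size N E s f \<le> k)"

datatype fnode = Src | Snk | L nat | R nat

definition gflow_nodes :: "nat \<Rightarrow> nat set \<Rightarrow> fnode set" where
  "gflow_nodes m A = {Src, Snk} \<union> L ` A \<union> R ` verts m"

definition gflow_edges ::
  "nat \<Rightarrow> (nat \<times> nat) set \<Rightarrow> (nat \<times> nat) set \<Rightarrow> nat \<Rightarrow> nat set \<Rightarrow> (fnode \<times> fnode) set" where
  "gflow_edges m D B v A =
     {(Src, L a) | a. a \<in> A} \<union>
     {(L a, R a) | a. a \<in> A} \<union>
     {(L a, R w) | a w. a \<in> A \<and> w \<in> verts m \<and> (a, w) \<in> B} \<union>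
     {(R w, R u) | w u. w \<in> verts m \<and> u \<in> verts m \<and> (w, u) \<in> D} \<union>
     {(R w, Snk) | w. w \<in> verts m \<and> w \<in> pa D v}"

definition gflow_cV :: "fnode \<Rightarrow> ereal" where
  "gflow_cV x = (if x = Src \<or> x = Snk then \<infinity> else 1)"

definition gflow_cD :: "fnode \<times> fnode \<Rightarrow> ereal" where
  "gflow_cD e = \<infinity>"

end

theory Submission
  imports Defs
begin


definition walk :: "('a \<times> 'a) set \<Rightarrow> 'a list \<Rightarrow> bool" where
  "walk E p \<longleftrightarrow> p \<noteq> [] \<and> successively (\<lambda>a b. (a, b) \<in> E) p"

definition stpath :: "('a \<times> 'a) set \<Rightarrow> 'a set \<Rightarrow> 'a set \<Rightarrow> 'a list \<Rightarrow> bool" where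
  "stpath E S T p \<longleftrightarrow> walk E p \<and> hd p \<in> S \<and> last p \<in> T"

definition separates :: "('a \<times> 'a) set \<Rightarrow> 'a set \<Rightarrow> 'a set \<Rightarrow> 'a set \<Rightarrow> bool" where
  "separates E S T X \<longleftrightarrow> (\<forall>p. stpath E S T p \<longrightarrow> set p \<inter> X \<noteq> {})"

definition linking :: "('a \<times> 'a) set \<Rightarrow> 'a set \<Rightarrow> 'a set \<Rightarrow> 'a list set \<Rightarrow> bool" where
  "linking E S T Ps \<longleftrightarrow> (\<forall>p\<in>Ps. stpath E S T p) \<and>
     (\<forall>p\<in>Ps. \<forall>q\<in>Ps. p \<noteq> q \<longrightarrow> set p \<inter> set q = {})"

lemma in_set_tlD: "x \<in> set (tl p) \<Longrightarrow> x \<in> set p"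
  by (cases p) auto

lemma walk_Cons: "walk E (a # p) \<longleftrightarrow> (p = [] \<or> ((a, hd p) \<in> E \<and> walk E p))"
  by (auto simp: walk_def successively_Cons)

lemma walk_single[simp]: "walk E [a]"
  by (simp add: walk_def)

lemma walk_nonempty: "walk E p \<Longrightarrow> p \<noteq> []"
  by (simp add: walk_def)

lemma walk_mono: "walk E p \<Longrightarrow> E \<subseteq> E' \<Longrightarrow> walk E' p"
  unfolding walk_def by (auto elim: successively_mono)

lemma walk_append: "walk E p \<Longrightarrow> walk E q \<Longrightarrow> (last p, hd q) \<in> E \<Longrightarrow> walk E (p @ q)"
  by (auto simp: walk_def successively_append_iff)

lemma walk_append_tl: "walk E p \<Longrightarrow> walk E q \<Longrightarrow> last p = hd q \<Longrightarrow> walk E (p @ tl q)"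
proof (cases q)
  case Nil
  assume "walk E q" then show ?thesis using Nil by (simp add: walk_def)
next
  case (Cons a q')
  assume h: "walk E p" "walk E q" "last p = hd q"
  show ?thesis
  proof (cases "q' = []")
    case True then show ?thesis using h Cons by simp
  next
    case False
    then show ?thesis using h Cons by (auto simp: walk_Cons intro!: walk_append)
  qed
qed

lemma walk_split: "walk E (p1 @ w # p2) \<Longrightarrow> walk E (p1 @ [w]) \<and> walk E (w # p2)"
  by (auto simp: walk_def successively_append_iff)

lemma walk_join: "walk E (p1 @ [w]) \<Longrightarrow> walk E (w # q2) \<Longrightarrow> walk E (p1 @ w # q2)"
  by (auto simp: walk_def successively_append_iff)

lemma walk_insert_edge:
  "walk (insert (x, y) F) p \<Longrightarrow> \<not> walk F p \<Longrightarrow> x \<in> set (butlast p) \<and> y \<in> set (tl p)"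
proof (induction p)
  case Nil then show ?case by (simp add: walk_def)
next
  case (Cons a p)
  then have "p \<noteq> []" by auto
  show ?case
  proof (cases "walk F p")
    case True
    then have "(a, hd p) \<notin> F" using Cons.prems by (auto simp: walk_Cons)
    then have "(a, hd p) = (x, y)" using Cons.prems \<open>p \<noteq> []\<close> by (auto simp: walk_Cons)
    then show ?thesis using \<open>p \<noteq> []\<close> by auto
  next
    case False
    then have "x \<in> set (butlast p) \<and> y \<in> set (tl p)"
      using Cons.IH Cons.prems \<open>p \<noteq> []\<close> by (auto simp: walk_Cons)
    then show ?thesis using \<open>p \<noteq> []\<close> by (auto dest: list.set_sel(2))
  qed
qed

lemma first_hit:
  "walk E p \<Longrightarrow> set p \<inter> Z \<noteq> {} \<Longrightarrow>
   \<exists>q. walk E q \<and> hd q = hd p \<and> last q \<in> Z \<and> set (butlast q) \<inter> Z = {} \<and> set q \<subseteq> set p"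
proof (induction p)
  case Nil then show ?case by simp
next
  case (Cons a p)
  show ?case
  proof (cases "a \<in> Z")
    case True then show ?thesis by (intro exI[of _ "[a]"]) auto
  next
    case False
    then have "p \<noteq> []" "set p \<inter> Z \<noteq> {}" using Cons.prems by auto
    moreover have "walk E p" "(a, hd p) \<in> E" using Cons.prems \<open>p \<noteq> []\<close> by (auto simp: walk_Cons)
    ultimately obtain q where q: "walk E q" "hd q = hd p" "last q \<in> Z"
      "set (butlast q) \<inter> Z = {}" "set q \<subseteq> set p" using Cons.IH by blast
    then have "q \<noteq> []" by (auto simp: walk_def)
    show ?thesis
      by (rule exI[of _ "a # q"]) (use q \<open>q \<noteq> []\<close> False \<open>(a, hd p) \<in> E\<close> in \<open>auto simp: walk_Cons\<close>)
  qed
qed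

lemma last_hit:
  "walk E p \<Longrightarrow> set p \<inter> Z \<noteq> {} \<Longrightarrow>
   \<exists>q. walk E q \<and> last q = last p \<and> hd q \<in> Z \<and> set (tl q) \<inter> Z = {} \<and> set q \<subseteq> set p"
proof (induction p)
  case Nil then show ?case by simp
next
  case (Cons a p)
  show ?case
  proof (cases "p \<noteq> [] \<and> set p \<inter> Z \<noteq> {}")
    case True
    then have "walk E p" using Cons.prems by (auto simp: walk_Cons)
    then obtain q where q: "walk E q" "last q = last p" "hd q \<in> Z"
      "set (tl q) \<inter> Z = {}" "set q \<subseteq> set p" using Cons.IH True by blast
    then show ?thesis using True by (intro exI[of _ q]) auto
  next
    case False
    then have "a \<in> Z" using Cons.prems by auto
    then show ?thesis using False Cons.prems by (intro exI[of _ "a # p"]) auto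
  qed
qed

lemma disj_family:
  assumes "\<forall>z\<in>I. h z \<noteq> []" "\<forall>z\<in>I. \<forall>z'\<in>I. z \<noteq> z' \<longrightarrow> set (h z) \<inter> set (h z') = {}"
  shows "inj_on h I" "\<forall>p\<in>h ` I. \<forall>q\<in>h ` I. p \<noteq> q \<longrightarrow> set p \<inter> set q = {}"
proof -
  show inj: "inj_on h I"
  proof (rule inj_onI)
    fix a b assume "a \<in> I" "b \<in> I" "h a = h b"
    then show "a = b" using assms by fastforce
  qed
  show "\<forall>p\<in>h ` I. \<forall>q\<in>h ` I. p \<noteq> q \<longrightarrow> set p \<inter> set q = {}"
    using assms(2) by fastforce
qed

lemma shrink_linking:
  assumes "linking E S T Ps"
    and "\<forall>p\<in>Ps. g p \<noteq> [] \<and> set (g p) \<subseteq> set p \<and> stpath E S' T' (g p)"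
  shows "inj_on g Ps" "linking E S' T' (g ` Ps)"
proof -
  have d: "\<forall>p\<in>Ps. \<forall>q\<in>Ps. p \<noteq> q \<longrightarrow> set (g p) \<inter> set (g q) = {}"
    using assms unfolding linking_def by blast
  from disj_family[of Ps g] d assms(2)
  show "inj_on g Ps" "linking E S' T' (g ` Ps)"
    by (auto simp: linking_def)
qed

lemma linking_mono: "linking F S T Ps \<Longrightarrow> F \<subseteq> G \<Longrightarrow> linking G S T Ps"
  by (auto simp: linking_def stpath_def intro: walk_mono)

lemma trim_front:
  assumes "linking E S Z Ps"
  shows "\<exists>Ps'. linking E S Z Ps' \<and> card Ps' = card Ps \<and> (\<forall>p\<in>Ps'. set (butlast p) \<inter> Z = {})"
proof -
  have "\<forall>p\<in>Ps. \<exists>q. walk E q \<and> hd q = hd p \<and> last q \<in> Z \<and> set (butlast q) \<inter> Z = {} \<and> set q \<subseteq> set p"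
  proof
    fix p assume "p \<in> Ps"
    then have "walk E p" "last p \<in> Z" using assms by (auto simp: linking_def stpath_def)
    then have "set p \<inter> Z \<noteq> {}" using walk_nonempty[of E p] last_in_set by blast
    then show "\<exists>q. walk E q \<and> hd q = hd p \<and> last q \<in> Z \<and> set (butlast q) \<inter> Z = {} \<and> set q \<subseteq> set p"
      using first_hit \<open>walk E p\<close> by blast
  qed
  then obtain g where g: "\<forall>p\<in>Ps. walk E (g p) \<and> hd (g p) = hd p \<and> last (g p) \<in> Z \<and>
     set (butlast (g p)) \<inter> Z = {} \<and> set (g p) \<subseteq> set p" by metis
  have "\<forall>p\<in>Ps. g p \<noteq> [] \<and> set (g p) \<subseteq> set p \<and> stpath E S Z (g p)"
    using g assms by (auto simp: linking_def stpath_def walk_def)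
  from shrink_linking[OF assms this] g show ?thesis
    by (intro exI[of _ "g ` Ps"]) (auto simp: card_image)
qed

lemma trim_back:
  assumes "linking E Z T Ps"
  shows "\<exists>Ps'. linking E Z T Ps' \<and> card Ps' = card Ps \<and> (\<forall>p\<in>Ps'. set (tl p) \<inter> Z = {})"
proof -
  have "\<forall>p\<in>Ps. \<exists>q. walk E q \<and> last q = last p \<and> hd q \<in> Z \<and> set (tl q) \<inter> Z = {} \<and> set q \<subseteq> set p"
  proof
    fix p assume "p \<in> Ps"
    then have "walk E p" "hd p \<in> Z" using assms by (auto simp: linking_def stpath_def)
    then have "set p \<inter> Z \<noteq> {}" using walk_nonempty[of E p] hd_in_set by blast
    then show "\<exists>q. walk E q \<and> last q = last p \<and> hd q \<in> Z \<and> set (tl q) \<inter> Z = {} \<and> set q \<subseteq> set p"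
      using last_hit \<open>walk E p\<close> by blast
  qed
  then obtain g where g: "\<forall>p\<in>Ps. walk E (g p) \<and> last (g p) = last p \<and> hd (g p) \<in> Z \<and>
     set (tl (g p)) \<inter> Z = {} \<and> set (g p) \<subseteq> set p" by metis
  have "\<forall>p\<in>Ps. g p \<noteq> [] \<and> set (g p) \<subseteq> set p \<and> stpath E Z T (g p)"
    using g assms by (auto simp: linking_def stpath_def walk_def)
  from shrink_linking[OF assms this] g show ?thesis
    by (intro exI[of _ "g ` Ps"]) (auto simp: card_image)
qed


lemma set_butlast_last: "xs \<noteq> [] \<Longrightarrow> set xs = insert (last xs) (set (butlast xs))"
  by (induction xs) auto

lemma menger:
  assumes "finite E"
  shows "finite S \<Longrightarrow> (\<And>X. finite X \<Longrightarrow> separates E S T X \<Longrightarrow> k \<le> card X) \<Longrightarrow>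
     \<exists>Ps. linking E S T Ps \<and> card Ps = k \<and> finite Ps"
  using assms
proof (induction E arbitrary: S T k rule: finite_induct)
  case empty
  have w: "walk {} p \<longleftrightarrow> (\<exists>a. p = [a])" for p :: "'a list"
    by (cases p) (auto simp: walk_def successively_Cons)
  have "separates {} S T (S \<inter> T)"
    by (auto simp: separates_def stpath_def w)
  then have "k \<le> card (S \<inter> T)" using empty by auto
  then obtain Z where Z: "Z \<subseteq> S \<inter> T" "card Z = k" using obtain_subset_with_card_n by metis
  then have "finite Z" using empty(1) finite_subset by blast
  have "linking {} S T ((\<lambda>a. [a]) ` Z)"
    using Z by (auto simp: linking_def stpath_def)
  moreover have "card ((\<lambda>a. [a]) ` Z) = k" using Z by (simp add: card_image inj_on_def)
  ultimately show ?case using \<open>finite Z\<close> by blast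
next
  case (insert e F)
  obtain x y where e: "e = (x, y)" by (cases e)
  let ?G = "insert e F"
  show ?case
  proof (cases "\<forall>X. finite X \<longrightarrow> separates F S T X \<longrightarrow> k \<le> card X")
    case True
    from insert.IH[OF insert.prems(1)] True insert.hyps obtain Ps where
      "linking F S T Ps" "card Ps = k" "finite Ps" by blast
    then show ?thesis using linking_mono[of F S T Ps ?G] by blast
  next
    case False
    then obtain Y where Y: "finite Y" "separates F S T Y" "card Y < k" by (auto simp: not_le)
    have sepz: "separates ?G S T (insert z Y)" if "z = x \<or> z = y" for z
      unfolding separates_def
    proof (intro allI impI)
      fix p assume p: "stpath ?G S T p"
      show "set p \<inter> insert z Y \<noteq> {}"
      proof (cases "walk F p")
        case True
        then show ?thesis using p Y(2) by (auto simp: separates_def stpath_def)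
      next
        case False
        then have "x \<in> set (butlast p) \<and> y \<in> set (tl p)"
          using walk_insert_edge[of x y F p] p e by (auto simp: stpath_def)
        then show ?thesis using that by (auto dest: in_set_butlastD in_set_tlD)
      qed
    qed
    have ck: "k \<le> card (insert z Y)" if "z = x \<or> z = y" for z
      using insert.prems(2)[OF _ sepz[OF that]] Y(1) by simp
    have xY: "x \<notin> Y" using ck[of x] Y by (auto simp: insert_absorb)
    have yY: "y \<notin> Y" using ck[of y] Y by (auto simp: insert_absorb)
    have cx: "card (insert x Y) = k" using ck[of x] Y xY by simp
    have cy: "card (insert y Y) = k" using ck[of y] Y yY by simp
    define Yx where "Yx = insert x Y"
    define Yy where "Yy = insert y Y"
    have sep1: "k \<le> card Z" if "finite Z" "separates F S Yx Z" for Z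
    proof -
      have "separates ?G S T Z"
        unfolding separates_def
      proof (intro allI impI)
        fix p assume p: "stpath ?G S T p"
        then have "set p \<inter> Yx \<noteq> {}" using sepz[of x] by (auto simp: separates_def Yx_def)
        then obtain q where q: "walk ?G q" "hd q = hd p" "last q \<in> Yx"
          "set (butlast q) \<inter> Yx = {}" "set q \<subseteq> set p"
          using first_hit[of ?G p Yx] p by (auto simp: stpath_def)
        have "walk F q"
        proof (rule ccontr)
          assume "\<not> walk F q"
          then have "x \<in> set (butlast q)" using walk_insert_edge[of x y F q] q e by auto
          then show False using q(4) by (auto simp: Yx_def)
        qed
        then have "stpath F S Yx q" using q p by (auto simp: stpath_def)
        then have "set q \<inter> Z \<noteq> {}" using that(2) by (auto simp: separates_def)
        then show "set p \<inter> Z \<noteq> {}" using q(5) by blast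
      qed
      then show ?thesis using insert.prems(2) that(1) by blast
    qed
    have sep2: "k \<le> card Z" if "finite Z" "separates F Yy T Z" for Z
    proof -
      have "separates ?G S T Z"
        unfolding separates_def
      proof (intro allI impI)
        fix p assume p: "stpath ?G S T p"
        then have "set p \<inter> Yy \<noteq> {}" using sepz[of y] by (auto simp: separates_def Yy_def)
        then obtain q where q: "walk ?G q" "last q = last p" "hd q \<in> Yy"
          "set (tl q) \<inter> Yy = {}" "set q \<subseteq> set p"
          using last_hit[of ?G p Yy] p by (auto simp: stpath_def)
        have "walk F q"
        proof (rule ccontr)
          assume "\<not> walk F q"
          then have "y \<in> set (tl q)" using walk_insert_edge[of x y F q] q e by auto
          then show False using q(4) by (auto simp: Yy_def)
        qed
        then have "stpath F Yy T q" using q p by (auto simp: stpath_def)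
        then have "set q \<inter> Z \<noteq> {}" using that(2) by (auto simp: separates_def)
        then show "set p \<inter> Z \<noteq> {}" using q(5) by blast
      qed
      then show ?thesis using insert.prems(2) that(1) by blast
    qed
    obtain P1 where P1: "linking F S Yx P1" "card P1 = k"
      using insert.IH[OF insert.prems(1) sep1] insert.hyps by blast
    obtain P2 where P2: "linking F Yy T P2" "card P2 = k"
      using insert.IH[of Yy T k] sep2 Y(1) insert.hyps by (auto simp: Yy_def)
    obtain Q1 where Q1: "linking F S Yx Q1" "card Q1 = k" "\<forall>p\<in>Q1. set (butlast p) \<inter> Yx = {}"
      using trim_front[OF P1(1)] P1(2) by auto
    obtain Q2 where Q2: "linking F Yy T Q2" "card Q2 = k" "\<forall>p\<in>Q2. set (tl p) \<inter> Yy = {}"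
      using trim_back[OF P2(1)] P2(2) by auto
    have kpos: "k > 0" using Y by auto
    have fQ1: "finite Q1" using Q1(2) kpos card_ge_0_finite by blast
    have fQ2: "finite Q2" using Q2(2) kpos card_ge_0_finite by blast
    have ne1: "p \<noteq> []" if "p \<in> Q1" for p using that Q1(1) by (auto simp: linking_def stpath_def walk_def)
    have ne2: "p \<noteq> []" if "p \<in> Q2" for p using that Q2(1) by (auto simp: linking_def stpath_def walk_def)
    have key: "set p \<inter> set q \<subseteq> Y" if "p \<in> Q1" "q \<in> Q2" for p q
    proof
      fix w assume w: "w \<in> set p \<inter> set q"
      show "w \<in> Y"
      proof (rule ccontr)
        assume wY: "w \<notin> Y"
        obtain p1 p2 where pp: "p = p1 @ w # p2" using w split_list by fastforce
        obtain q1 q2 where qq: "q = q1 @ w # q2" using w split_list by fastforce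
        have wp: "walk F p" "hd p \<in> S" using that Q1(1) by (auto simp: linking_def stpath_def)
        have wq: "walk F q" "last q \<in> T" using that Q2(1) by (auto simp: linking_def stpath_def)
        let ?r = "p1 @ w # q2"
        have "walk F ?r" using walk_split[of F p1 w p2] walk_split[of F q1 w q2] wp wq pp qq
          by (auto intro: walk_join)
        moreover have "hd ?r = hd p" using pp by (cases p1) auto
        moreover have "last ?r = last q" using qq by simp
        ultimately have "stpath F S T ?r" using wp wq by (simp add: stpath_def)
        then have "set ?r \<inter> Y \<noteq> {}" using Y(2) unfolding separates_def by blast
        moreover have "set p1 \<subseteq> set (butlast p)" using pp by (simp add: butlast_append)
        moreover have "set q2 \<subseteq> set (tl q)" using qq by (cases q1) auto
        moreover have "set (butlast p) \<inter> Y = {}" using Q1(3) that(1) by (auto simp: Yx_def)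
        moreover have "set (tl q) \<inter> Y = {}" using Q2(3) that(2) by (auto simp: Yy_def)
        ultimately show False using wY by auto
      qed
    qed
    have lastQ1: "last ` Q1 = Yx"
    proof -
      have sub: "last ` Q1 \<subseteq> Yx" using Q1(1) by (auto simp: linking_def stpath_def)
      have "inj_on last Q1"
      proof (rule inj_onI)
        fix p q assume "p \<in> Q1" "q \<in> Q1" "last p = last q"
        show "p = q"
        proof (rule ccontr)
          assume "p \<noteq> q"
          then have "set p \<inter> set q = {}" using Q1(1) \<open>p \<in> Q1\<close> \<open>q \<in> Q1\<close> unfolding linking_def by blast
          moreover have "last p \<in> set p" "last q \<in> set q" using ne1 \<open>p \<in> Q1\<close> \<open>q \<in> Q1\<close> by auto
          ultimately show False using \<open>last p = last q\<close> by auto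
        qed
      qed
      then have "card (last ` Q1) = card Yx" using Q1(2) cx by (simp add: card_image Yx_def)
      moreover have "finite Yx" using Y(1) by (simp add: Yx_def)
      ultimately show ?thesis using card_subset_eq[OF _ sub] by blast
    qed
    have hdQ2: "hd ` Q2 = Yy"
    proof -
      have sub: "hd ` Q2 \<subseteq> Yy" using Q2(1) by (auto simp: linking_def stpath_def)
      have "inj_on hd Q2"
      proof (rule inj_onI)
        fix p q assume "p \<in> Q2" "q \<in> Q2" "hd p = hd q"
        show "p = q"
        proof (rule ccontr)
          assume "p \<noteq> q"
          then have "set p \<inter> set q = {}" using Q2(1) \<open>p \<in> Q2\<close> \<open>q \<in> Q2\<close> unfolding linking_def by blast
          moreover have "hd p \<in> set p" "hd q \<in> set q" using ne2 \<open>p \<in> Q2\<close> \<open>q \<in> Q2\<close> by auto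
          ultimately show False using \<open>hd p = hd q\<close> by auto
        qed
      qed
      then have "card (hd ` Q2) = card Yy" using Q2(2) cy by (simp add: card_image Yy_def)
      moreover have "finite Yy" using Y(1) by (simp add: Yy_def)
      ultimately show ?thesis using card_subset_eq[OF _ sub] by blast
    qed
    define P where "P z = inv_into Q1 last z" for z
    define Q where "Q z = inv_into Q2 hd z" for z
    have P: "P z \<in> Q1" "last (P z) = z" if "z \<in> Yx" for z
      using that lastQ1 unfolding P_def by (auto intro: inv_into_into f_inv_into_f)
    have Q: "Q z \<in> Q2" "hd (Q z) = z" if "z \<in> Yy" for z
      using that hdQ2 unfolding Q_def by (auto intro: inv_into_into f_inv_into_f)
    define g where "g z = (if z = x then y else z)" for z
    define QQ where "QQ z = (if z = x then Q y else tl (Q z))" for z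
    define Rp where "Rp z = P z @ QQ z" for z
    have gY: "g z \<in> Yy" if "z \<in> Yx" for z using that by (auto simp: g_def Yx_def Yy_def)
    have ginj: "g z \<noteq> g z'" if "z \<in> Yx" "z' \<in> Yx" "z \<noteq> z'" for z z'
      using that xY yY by (auto simp: g_def Yx_def)
    have QQsub: "set (QQ z) \<subseteq> set (Q (g z))" if "z \<in> Yx" for z
      by (auto simp: QQ_def g_def dest: in_set_tlD)
    have QQY: "set (QQ z) \<inter> Y = {}" if "z \<in> Yx" for z
    proof (cases "z = x")
      case True
      have "Q y \<in> Q2" "hd (Q y) = y" using Q[of y] by (auto simp: Yy_def)
      moreover have "set (Q y) = insert (hd (Q y)) (set (tl (Q y)))"
        using ne2[of "Q y"] calculation by (cases "Q y") auto
      ultimately show ?thesis using True Q2(3) yY by (auto simp: QQ_def Yy_def)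
    next
      case False
      then have "z \<in> Yy" using that by (auto simp: Yx_def Yy_def)
      then show ?thesis using False Q2(3) Q[of z] by (auto simp: QQ_def Yy_def)
    qed
    have PY: "set (P z) \<inter> Y \<subseteq> {z}" if "z \<in> Yx" for z
    proof -
      have "set (P z) = insert (last (P z)) (set (butlast (P z)))"
        using ne1[OF P(1)[OF that]] by (rule set_butlast_last)
      then show ?thesis using Q1(3) P[OF that] by (auto simp: Yx_def)
    qed
    have Pdisj: "set (P z) \<inter> set (P z') = {}" if "z \<in> Yx" "z' \<in> Yx" "z \<noteq> z'" for z z'
    proof -
      have "P z \<noteq> P z'" using P[OF that(1)] P[OF that(2)] that(3) by metis
      then show ?thesis using P(1)[OF that(1)] P(1)[OF that(2)] Q1(1) unfolding linking_def by blast
    qed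
    have Qdisj: "set (Q u) \<inter> set (Q u') = {}" if "u \<in> Yy" "u' \<in> Yy" "u \<noteq> u'" for u u'
    proof -
      have "Q u \<noteq> Q u'" using Q[OF that(1)] Q[OF that(2)] that(3) by metis
      then show ?thesis using Q(1)[OF that(1)] Q(1)[OF that(2)] Q2(1) unfolding linking_def by blast
    qed
    have disj: "set (Rp z) \<inter> set (Rp z') = {}" if "z \<in> Yx" "z' \<in> Yx" "z \<noteq> z'" for z z'
    proof -
      have a: "set (P z) \<inter> set (P z') = {}" using Pdisj that by blast
      have b: "set (QQ z) \<inter> set (QQ z') = {}"
        using Qdisj[OF gY[OF that(1)] gY[OF that(2)] ginj[OF that]] QQsub that by blast
      have c: "set (P z) \<inter> set (QQ z') = {}"
        using key[OF P(1)[OF that(1)] Q(1)[OF gY[OF that(2)]]] QQsub[OF that(2)] QQY[OF that(2)] by blast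
      have d: "set (P z') \<inter> set (QQ z) = {}"
        using key[OF P(1)[OF that(2)] Q(1)[OF gY[OF that(1)]]] QQsub[OF that(1)] QQY[OF that(1)] by blast
      show ?thesis using a b c d by (auto simp: Rp_def)
    qed
    have Rne: "Rp z \<noteq> []" if "z \<in> Yx" for z using ne1[OF P(1)[OF that]] by (simp add: Rp_def)
    have Rst: "stpath ?G S T (Rp z)" if "z \<in> Yx" for z
    proof -
      have wP: "walk F (P z)" "hd (P z) \<in> S" using P(1)[OF that] Q1(1) by (auto simp: linking_def stpath_def)
      have wQ: "walk F (Q (g z))" "last (Q (g z)) \<in> T" using Q(1)[OF gY[OF that]] Q2(1)
        by (auto simp: linking_def stpath_def)
      have hdR: "hd (Rp z) = hd (P z)" using ne1[OF P(1)[OF that]] by (simp add: Rp_def)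
      show ?thesis
      proof (cases "z = x")
        case True
        have "walk ?G (Rp z)"
          using True wP wQ P(2)[OF that] Q(2)[of y] e
          by (auto simp: Rp_def QQ_def g_def Yy_def intro!: walk_append intro: walk_mono)
        moreover have "last (Rp z) = last (Q y)"
          using True ne2[OF Q(1)[of y]] by (simp add: Rp_def QQ_def Yy_def)
        ultimately show ?thesis using wP wQ hdR True by (simp add: stpath_def g_def)
      next
        case False
        then have zy: "z \<in> Yy" using that by (auto simp: Yx_def Yy_def)
        have "walk ?G (Rp z)"
          using False wP wQ P(2)[OF that] Q(2)[OF zy]
          by (auto simp: Rp_def QQ_def g_def intro!: walk_append_tl intro: walk_mono)
        moreover have "last (Rp z) = last (Q z)"
        proof (cases "tl (Q z) = []")
          case True
          then have "Q z = [z]" using ne2[OF Q(1)[OF zy]] Q(2)[OF zy] by (cases "Q z") auto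
          then show ?thesis using False P(2)[OF that] ne1[OF P(1)[OF that]] True
            by (simp add: Rp_def QQ_def)
        next
          case tne: False
          then show ?thesis using False by (simp add: Rp_def QQ_def last_tl)
        qed
        ultimately show ?thesis using wP wQ hdR False by (simp add: stpath_def g_def)
      qed
    qed
    from disj_family[of Yx Rp] Rne disj
    have "inj_on Rp Yx" "\<forall>p\<in>Rp ` Yx. \<forall>q\<in>Rp ` Yx. p \<noteq> q \<longrightarrow> set p \<inter> set q = {}" by auto
    moreover have "finite Yx" using Y(1) by (simp add: Yx_def)
    ultimately have "linking ?G S T (Rp ` Yx)" "card (Rp ` Yx) = card Yx" "finite (Rp ` Yx)"
      using Rst by (auto simp: linking_def card_image)
    moreover have "card Yx = k" using cx by (simp add: Yx_def)
    ultimately show ?thesis by metis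
  qed
qed


lemma succ_cut: "successively P (a # ys @ a # zs) \<Longrightarrow> successively P (a # zs)"
proof -
  assume h: "successively P (a # ys @ a # zs)"
  have "a # ys @ a # zs = (a # ys) @ (a # zs)" by simp
  then show ?thesis using h by (simp only: successively_append_iff)
qed

lemma walk_distinct:
  "walk E p \<Longrightarrow> \<exists>q. walk E q \<and> distinct q \<and> hd q = hd p \<and> last q = last p \<and> set q \<subseteq> set p"
proof (induction "length p" arbitrary: p rule: less_induct)
  case less
  show ?case
  proof (cases "distinct p")
    case True then show ?thesis using less.prems by blast
  next
    case False
    then obtain xs y ys zs where p: "p = xs @ [y] @ ys @ [y] @ zs" using not_distinct_decomp by blast
    let ?p = "xs @ [y] @ zs"
    have "walk E ?p" using less.prems succ_cut[of "\<lambda>a b. (a, b) \<in> E" y ys zs] unfolding p walk_def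
      by (auto simp: successively_append_iff)
    moreover have "length ?p < length p" using p by simp
    ultimately obtain q where q: "walk E q" "distinct q" "hd q = hd ?p" "last q = last ?p" "set q \<subseteq> set ?p"
      using less.hyps by blast
    have "hd ?p = hd p" "last ?p = last p" "set ?p \<subseteq> set p" using p by (cases xs; cases zs; auto)+
    then show ?thesis using q by auto
  qed
qed

lemma linking_distinct:
  assumes "linking E S T Ps"
  shows "\<exists>Ps'. linking E S T Ps' \<and> card Ps' = card Ps \<and> (\<forall>p\<in>Ps'. distinct p) \<and> (finite Ps \<longrightarrow> finite Ps')"
proof -
  have "\<forall>p\<in>Ps. \<exists>q. walk E q \<and> distinct q \<and> hd q = hd p \<and> last q = last p \<and> set q \<subseteq> set p"
    using assms walk_distinct by (auto simp: linking_def stpath_def)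
  then obtain g where g: "\<forall>p\<in>Ps. walk E (g p) \<and> distinct (g p) \<and> hd (g p) = hd p \<and> last (g p) = last p \<and> set (g p) \<subseteq> set p"
    by metis
  have "\<forall>p\<in>Ps. g p \<noteq> [] \<and> set (g p) \<subseteq> set p \<and> stpath E S T (g p)"
    using g assms by (auto simp: linking_def stpath_def walk_def)
  from shrink_linking[OF assms this] g show ?thesis
    by (intro exI[of _ "g ` Ps"]) (auto simp: card_image)
qed

lemma walk_set_sub:
  "walk EH p \<Longrightarrow> EH \<subseteq> VH \<times> VH \<Longrightarrow> hd p \<in> VH \<Longrightarrow> set p \<subseteq> VH"
proof (induction p)
  case Nil then show ?case by simp
next
  case (Cons a p)
  then show ?case by (cases p) (auto simp: walk_Cons)
qed

definition netN :: "fnode set \<Rightarrow> fnode set" where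
  "netN VH = insert Src (insert Snk VH)"

definition netE :: "fnode set \<Rightarrow> (fnode \<times> fnode) set \<Rightarrow> fnode set \<Rightarrow> (fnode \<times> fnode) set" where
  "netE S EH T = (\<lambda>x. (Src, x)) ` S \<union> EH \<union> (\<lambda>x. (x, Snk)) ` T"

lemma outflow_edges:
  assumes "E \<subseteq> N \<times> N"
  shows "outflow N E f x = sum f {e\<in>E. fst e = x}"
proof -
  have "{e\<in>E. fst e = x} = (\<lambda>w. (x, w)) ` {w\<in>N. (x, w) \<in> E}" using assms by force
  moreover have "inj_on (\<lambda>w. (x, w)) {w\<in>N. (x, w) \<in> E}" by (auto simp: inj_on_def)
  ultimately show ?thesis by (simp add: outflow_def sum.reindex)
qed

lemma inflow_edges:
  assumes "E \<subseteq> N \<times> N"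
  shows "inflow N E f x = sum f {e\<in>E. snd e = x}"
proof -
  have "{e\<in>E. snd e = x} = (\<lambda>u. (u, x)) ` {u\<in>N. (u, x) \<in> E}" using assms by force
  moreover have "inj_on (\<lambda>u. (u, x)) {u\<in>N. (u, x) \<in> E}" by (auto simp: inj_on_def)
  ultimately show ?thesis by (simp add: inflow_def sum.reindex)
qed

lemma sum_outflow_set:
  assumes "E \<subseteq> N \<times> N" "finite E" "finite U"
  shows "(\<Sum>x\<in>U. outflow N E f x) = sum f {e\<in>E. fst e \<in> U}"
proof -
  have "(\<Sum>x\<in>U. outflow N E f x) = (\<Sum>y\<in>U. sum f {e\<in>{e\<in>E. fst e \<in> U}. fst e = y})"
    by (rule sum.cong) (auto simp: outflow_edges[OF assms(1)] intro!: sum.cong)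
  also have "\<dots> = sum f {e\<in>E. fst e \<in> U}"
    by (rule sum.group) (use assms in auto)
  finally show ?thesis .
qed

lemma sum_inflow_set:
  assumes "E \<subseteq> N \<times> N" "finite E" "finite U"
  shows "(\<Sum>x\<in>U. inflow N E f x) = sum f {e\<in>E. snd e \<in> U}"
proof -
  have "(\<Sum>x\<in>U. inflow N E f x) = (\<Sum>y\<in>U. sum f {e\<in>{e\<in>E. snd e \<in> U}. snd e = y})"
    by (rule sum.cong) (auto simp: inflow_edges[OF assms(1)] intro!: sum.cong)
  also have "\<dots> = sum f {e\<in>E. snd e \<in> U}"
    by (rule sum.group) (use assms in auto)
  finally show ?thesis .
qed

locale net =
  fixes VH :: "fnode set" and EH S T
  assumes fin: "finite VH" and SrcV: "Src \<notin> VH" and SnkV: "Snk \<notin> VH"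
    and EHV: "EH \<subseteq> VH \<times> VH" and SV: "S \<subseteq> VH" and TV: "T \<subseteq> VH"
begin

abbreviation "N \<equiv> netN VH"
abbreviation "E \<equiv> netE S EH T"

lemma EN: "E \<subseteq> N \<times> N"
  using EHV SV TV by (auto simp: netN_def netE_def)

lemma finN: "finite N" using fin by (simp add: netN_def)

lemma finE: "finite E"
  using finite_subset[OF EN] finN by blast

lemma no_in_Src: "{e\<in>E. snd e = Src} = {}"
  using EHV SV SrcV by (auto simp: netE_def)

lemma flow_le_sep:
  assumes f: "is_flow N E Src Snk gflow_cV gflow_cD f"
    and X: "X \<subseteq> VH" "separates EH S T X"
  shows "flow_size N E Src f \<le> real (card X)"
proof -
  define U' where "U' = {z. \<exists>p. walk EH p \<and> hd p \<in> S \<and> last p = z \<and> set p \<inter> X = {}}"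
  define U where "U = insert Src U'"
  have U'V: "U' \<subseteq> VH"
  proof
    fix z assume "z \<in> U'"
    then obtain p where p: "walk EH p" "hd p \<in> S" "last p = z" by (auto simp: U'_def)
    then have "set p \<subseteq> VH" using walk_set_sub[OF p(1) EHV] SV by auto
    then show "z \<in> VH" using p walk_nonempty[OF p(1)] last_in_set by blast
  qed
  have finU: "finite U" using U'V fin finite_subset by (auto simp: U_def)
  have SrcU': "Src \<notin> U'" using U'V SrcV by blast
  have fpos: "0 \<le> f e" if "e \<in> E" for e using f that by (auto simp: is_flow_def)
  have cons: "inflow N E f x = outflow N E f x" if "x \<in> U'" for x
    using f that U'V SrcV SnkV by (auto simp: is_flow_def netN_def)
  have cap: "inflow N E f x \<le> 1" if "x \<in> VH" for x
  proof -
    have "x \<in> N - {Src, Snk}" using that SrcV SnkV by (auto simp: netN_def)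
    then have "ereal (inflow N E f x) \<le> gflow_cV x" using f unfolding is_flow_def by blast
    moreover have "gflow_cV x = 1" using that SrcV SnkV by (auto simp: gflow_cV_def)
    ultimately show ?thesis by simp
  qed
  have inSrc: "inflow N E f Src = 0"
    unfolding inflow_edges[OF EN] no_in_Src by simp
  have "(\<Sum>x\<in>U. outflow N E f x) - (\<Sum>x\<in>U. inflow N E f x) = outflow N E f Src"
  proof -
    have "(\<Sum>x\<in>U. outflow N E f x) = outflow N E f Src + (\<Sum>x\<in>U'. outflow N E f x)"
      using finU SrcU' by (simp add: U_def)
    moreover have "(\<Sum>x\<in>U. inflow N E f x) = inflow N E f Src + (\<Sum>x\<in>U'. inflow N E f x)"
      using finU SrcU' by (simp add: U_def)
    moreover have "(\<Sum>x\<in>U'. inflow N E f x) = (\<Sum>x\<in>U'. outflow N E f x)"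
      using cons by (rule sum.cong[OF refl])
    ultimately show ?thesis using inSrc by simp
  qed
  also have "(\<Sum>x\<in>U. outflow N E f x) = sum f {e\<in>E. fst e \<in> U}"
    by (rule sum_outflow_set[OF EN finE finU])
  also have "(\<Sum>x\<in>U. inflow N E f x) = sum f {e\<in>E. snd e \<in> U}"
    by (rule sum_inflow_set[OF EN finE finU])
  finally have eq: "sum f {e\<in>E. fst e \<in> U} - sum f {e\<in>E. snd e \<in> U} = outflow N E f Src" .
  define E1 where "E1 = {e\<in>E. fst e \<in> U \<and> snd e \<in> U}"
  define E2 where "E2 = {e\<in>E. fst e \<in> U \<and> snd e \<notin> U}"
  define E3 where "E3 = {e\<in>E. fst e \<notin> U \<and> snd e \<in> U}"
  have fE1: "finite E1" "finite E2" "finite E3" using finE by (auto simp: E1_def E2_def E3_def)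
  have "{e\<in>E. fst e \<in> U} = E1 \<union> E2" by (auto simp: E1_def E2_def)
  then have s1: "sum f {e\<in>E. fst e \<in> U} = sum f E1 + sum f E2"
    using fE1 by (simp add: sum.union_disjoint E1_def E2_def disjoint_iff)
  have "{e\<in>E. snd e \<in> U} = E1 \<union> E3" by (auto simp: E1_def E3_def)
  then have s2: "sum f {e\<in>E. snd e \<in> U} = sum f E1 + sum f E3"
    using fE1 by (simp add: sum.union_disjoint E1_def E3_def disjoint_iff)
  have "sum f E3 \<ge> 0" using fpos by (auto simp: E3_def intro: sum_nonneg)
  then have "outflow N E f Src \<le> sum f E2" using eq s1 s2 by simp
  also have "E2 \<subseteq> {e\<in>E. snd e \<in> X}"
  proof
    fix e assume e: "e \<in> E2"
    obtain u w where uw: "e = (u, w)" by (cases e)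
    have eE: "(u, w) \<in> E" "u \<in> U" "w \<notin> U" using e uw by (auto simp: E2_def)
    have "w \<in> X"
    proof (cases "u = Src")
      case True
      then have "w \<in> S" using eE EHV SrcV TV by (auto simp: netE_def)
      show ?thesis
      proof (rule ccontr)
        assume "w \<notin> X"
        then have "w \<in> U'" using \<open>w \<in> S\<close> unfolding U'_def by (intro CollectI exI[of _ "[w]"]) auto
        then show False using eE by (auto simp: U_def)
      qed
    next
      case False
      then have "u \<in> U'" using eE by (auto simp: U_def)
      then obtain p where p: "walk EH p" "hd p \<in> S" "last p = u" "set p \<inter> X = {}" by (auto simp: U'_def)
      have "u \<noteq> Src" using False .
      then have "(u, w) \<in> EH \<or> (u \<in> T \<and> w = Snk)" using eE by (auto simp: netE_def)
      then show ?thesis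
      proof
        assume ew: "(u, w) \<in> EH"
        show ?thesis
        proof (rule ccontr)
          assume "w \<notin> X"
          have "walk EH (p @ [w])" using p ew walk_nonempty[OF p(1)] by (auto intro: walk_append)
          moreover have "hd (p @ [w]) = hd p" using walk_nonempty[OF p(1)] by simp
          ultimately have "w \<in> U'" using p \<open>w \<notin> X\<close> unfolding U'_def by (intro CollectI exI[of _ "p @ [w]"]) auto
          then show False using eE by (auto simp: U_def)
        qed
      next
        assume "u \<in> T \<and> w = Snk"
        then have "stpath EH S T p" using p by (auto simp: stpath_def)
        then show ?thesis using p(4) X(2) by (auto simp: separates_def)
      qed
    qed
    then show "e \<in> {e\<in>E. snd e \<in> X}" using eE uw by auto
  qed
  then have "sum f E2 \<le> sum f {e\<in>E. snd e \<in> X}"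
    using finE fpos by (intro sum_mono2) auto
  also have "\<dots> = (\<Sum>x\<in>X. inflow N E f x)"
    using sum_inflow_set[OF EN finE finite_subset[OF X(1) fin], of f] by simp
  also have "\<dots> \<le> (\<Sum>x\<in>X. 1)"
    using cap X(1) by (intro sum_mono) auto
  also have "\<dots> = real (card X)" by simp
  finally show ?thesis by (simp add: flow_size_def)
qed

end


definition prs :: "'a list \<Rightarrow> ('a \<times> 'a) set" where
  "prs xs = set (zip xs (tl xs))"

lemma prs_Nil[simp]: "prs [] = {}" by (simp add: prs_def)

lemma prs_Cons: "prs (a # xs) = (if xs = [] then {} else {(a, hd xs)}) \<union> prs xs"
  by (cases xs) (auto simp: prs_def)

lemma prs_sub: "(u, w) \<in> prs xs \<Longrightarrow> u \<in> set xs \<and> w \<in> set xs"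
  by (induction xs) (auto simp: prs_Cons split: if_splits)

lemma prs_walk: "walk E xs \<Longrightarrow> prs xs \<subseteq> E"
  by (induction xs) (auto simp: prs_Cons walk_Cons)

lemma prs_in:
  "distinct xs \<Longrightarrow> card {u. (u, x) \<in> prs xs} = (if x \<in> set (tl xs) then 1 else 0)"
proof (induction xs)
  case Nil then show ?case by simp
next
  case (Cons a xs)
  have fin: "finite {u. (u, x) \<in> prs xs}"
    by (rule finite_subset[of _ "set xs"]) (auto dest: prs_sub)
  have eq: "{u. (u, x) \<in> prs (a # xs)} = (if xs \<noteq> [] \<and> x = hd xs then {a} else {}) \<union> {u. (u, x) \<in> prs xs}"
    by (auto simp: prs_Cons)
  show ?case
  proof (cases "xs = []")
    case True then show ?thesis by (simp add: prs_Cons)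
  next
    case ne: False
    show ?thesis
    proof (cases "x = hd xs")
      case True
      then have "x \<notin> set (tl xs)" using Cons.prems ne by (cases xs) auto
      then have "{u. (u, x) \<in> prs xs} = {}" using Cons.IH Cons.prems fin by auto
      then show ?thesis using eq True ne by simp
    next
      case False
      then have "x \<in> set xs \<longleftrightarrow> x \<in> set (tl xs)" using ne by (cases xs) auto
      then show ?thesis using eq False Cons.IH Cons.prems by simp
    qed
  qed
qed

lemma prs_out:
  "distinct xs \<Longrightarrow> card {w. (x, w) \<in> prs xs} = (if x \<in> set (butlast xs) then 1 else 0)"
proof (induction xs)
  case Nil then show ?case by simp
next
  case (Cons a xs)
  have fin: "finite {w. (x, w) \<in> prs xs}"
    by (rule finite_subset[of _ "set xs"]) (auto dest: prs_sub)
  have eq: "{w. (x, w) \<in> prs (a # xs)} = (if xs \<noteq> [] \<and> x = a then {hd xs} else {}) \<union> {w. (x, w) \<in> prs xs}"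
    by (auto simp: prs_Cons)
  show ?case
  proof (cases "xs = []")
    case True then show ?thesis by (simp add: prs_Cons)
  next
    case ne: False
    show ?thesis
    proof (cases "x = a")
      case True
      then have "x \<notin> set (butlast xs)" using Cons.prems by (auto dest: in_set_butlastD)
      then have "{w. (x, w) \<in> prs xs} = {}" using Cons.IH Cons.prems fin by auto
      then show ?thesis using eq True ne by simp
    next
      case False
      then show ?thesis using eq False Cons.IH Cons.prems ne by simp
    qed
  qed
qed

lemma sum_indicator_card:
  "finite A \<Longrightarrow> (\<Sum>u\<in>A. if P u then 1 else 0 :: real) = real (card {u\<in>A. P u})"
  by (simp add: sum.inter_filter[symmetric])

context net
begin

lemma flow_from_paths:
  assumes L: "linking EH S T Ps" and D: "\<forall>p\<in>Ps. distinct p" and F: "finite Ps"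
  shows "\<exists>f. is_flow N E Src Snk gflow_cV gflow_cD f \<and> flow_size N E Src f = real (card Ps)"
proof -
  define ext where "ext p = Src # p @ [Snk]" for p
  define EP where "EP = (\<Union>p\<in>Ps. prs (ext p))"
  define f where "f e = (if e \<in> EP then 1 else 0 :: real)" for e
  have pw: "walk EH p" "hd p \<in> S" "last p \<in> T" if "p \<in> Ps" for p
    using L that by (auto simp: linking_def stpath_def)
  have pne: "p \<noteq> []" if "p \<in> Ps" for p using pw(1)[OF that] walk_nonempty by blast
  have pV: "set p \<subseteq> VH" if "p \<in> Ps" for p
    using walk_set_sub[OF pw(1)[OF that] EHV] pw(2)[OF that] SV by auto
  have pdisj: "set p \<inter> set q = {}" if "p \<in> Ps" "q \<in> Ps" "p \<noteq> q" for p q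
    using L that by (auto simp: linking_def)
  have dext: "distinct (ext p)" if "p \<in> Ps" for p
    using D that pV[OF that] SrcV SnkV by (auto simp: ext_def)
  have wext: "walk E (ext p)" if "p \<in> Ps" for p
  proof -
    have "EH \<subseteq> E" by (auto simp: netE_def)
    then have "walk E p" using walk_mono pw(1)[OF that] by blast
    moreover have "(last p, Snk) \<in> E" using pw(3)[OF that] by (auto simp: netE_def)
    ultimately have "walk E (p @ [Snk])" by (auto intro: walk_append)
    moreover have "(Src, hd (p @ [Snk])) \<in> E" using pw(2)[OF that] pne[OF that] by (auto simp: netE_def)
    ultimately show ?thesis unfolding ext_def using walk_append[of E "[Src]" "p @ [Snk]"] by simp
  qed
  have EPE: "EP \<subseteq> E" using prs_walk wext by (auto simp: EP_def)
  have inf: "inflow N E f x = real (card {u. (u, x) \<in> EP})" for x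
  proof -
    have "inflow N E f x = real (card {u\<in>{u\<in>N. (u, x) \<in> E}. (u, x) \<in> EP})"
      unfolding inflow_def f_def using finN by (intro sum_indicator_card) auto
    also have "{u\<in>{u\<in>N. (u, x) \<in> E}. (u, x) \<in> EP} = {u. (u, x) \<in> EP}"
      using EPE EN by auto
    finally show ?thesis .
  qed
  have outf: "outflow N E f x = real (card {w. (x, w) \<in> EP})" for x
  proof -
    have "outflow N E f x = real (card {w\<in>{w\<in>N. (x, w) \<in> E}. (x, w) \<in> EP})"
      unfolding outflow_def f_def using finN by (intro sum_indicator_card) auto
    also have "{w\<in>{w\<in>N. (x, w) \<in> E}. (x, w) \<in> EP} = {w. (x, w) \<in> EP}"
      using EPE EN by auto
    finally show ?thesis .
  qed
  have inext: "x \<in> set q" if "x \<in> set (ext q)" "x \<in> VH" for x q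
    using that SrcV SnkV by (auto simp: ext_def)
  have node: "card {u. (u, x) \<in> EP} = card {w. (x, w) \<in> EP} \<and> card {u. (u, x) \<in> EP} \<le> 1"
    if xV: "x \<in> VH" for x
  proof (cases "\<exists>p\<in>Ps. x \<in> set p")
    case True
    then obtain p where p: "p \<in> Ps" "x \<in> set p" by blast
    have other: "q = p" if "q \<in> Ps" "x \<in> set (ext q)" for q
    proof (rule ccontr)
      assume "q \<noteq> p"
      then have "set p \<inter> set q = {}" using pdisj[OF p(1) that(1)] by auto
      then show False using inext[OF that(2) xV] p(2) by auto
    qed
    have e1: "{u. (u, x) \<in> EP} = {u. (u, x) \<in> prs (ext p)}"
    proof (intro set_eqI iffI)
      fix u assume "u \<in> {u. (u, x) \<in> EP}"
      then obtain q where q: "q \<in> Ps" "(u, x) \<in> prs (ext q)" unfolding EP_def by blast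
      have "x \<in> set (ext q)" using prs_sub[OF q(2)] by simp
      then have "q = p" using other q(1) by blast
      then show "u \<in> {u. (u, x) \<in> prs (ext p)}" using q by simp
    next
      fix u assume "u \<in> {u. (u, x) \<in> prs (ext p)}"
      then show "u \<in> {u. (u, x) \<in> EP}" using p(1) unfolding EP_def by blast
    qed
    have e2: "{w. (x, w) \<in> EP} = {w. (x, w) \<in> prs (ext p)}"
    proof (intro set_eqI iffI)
      fix u assume "u \<in> {u. (x, u) \<in> EP}"
      then obtain q where q: "q \<in> Ps" "(x, u) \<in> prs (ext q)" unfolding EP_def by blast
      have "x \<in> set (ext q)" using prs_sub[OF q(2)] by simp
      then have "q = p" using other q(1) by blast
      then show "u \<in> {u. (x, u) \<in> prs (ext p)}" using q by simp
    next
      fix u assume "u \<in> {u. (x, u) \<in> prs (ext p)}"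
      then show "u \<in> {u. (x, u) \<in> EP}" using p(1) unfolding EP_def by blast
    qed
    have "x \<in> set (tl (ext p))" "x \<in> set (butlast (ext p))" using p by (auto simp: ext_def)
    then show ?thesis using e1 e2 prs_in[OF dext[OF p(1)], of x] prs_out[OF dext[OF p(1)], of x] by simp
  next
    case False
    have "(u, x) \<notin> EP" "(x, u) \<notin> EP" for u
    proof -
      show "(u, x) \<notin> EP"
      proof
        assume "(u, x) \<in> EP"
        then obtain q where q: "q \<in> Ps" "(u, x) \<in> prs (ext q)" unfolding EP_def by blast
        have "x \<in> set (ext q)" using prs_sub[OF q(2)] by simp
        then have "x \<in> set q" using inext xV by blast
        then show False using False q(1) by blast
      qed
      show "(x, u) \<notin> EP"
      proof
        assume "(x, u) \<in> EP"
        then obtain q where q: "q \<in> Ps" "(x, u) \<in> prs (ext q)" unfolding EP_def by blast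
        have "x \<in> set (ext q)" using prs_sub[OF q(2)] by simp
        then have "x \<in> set q" using inext xV by blast
        then show False using False q(1) by blast
      qed
    qed
    then have "{u. (u, x) \<in> EP} = {}" "{w. (x, w) \<in> EP} = {}" by auto
    then show ?thesis by simp
  qed
  have src: "{w. (Src, w) \<in> EP} = hd ` Ps"
  proof -
    have "{w. (Src, w) \<in> prs (ext q)} = {hd q}" if "q \<in> Ps" for q
    proof -
      have "Src \<notin> set (q @ [Snk])" using pV[OF that] SrcV by auto
      then have "(Src, w) \<notin> prs (q @ [Snk])" for w using prs_sub[of Src w "q @ [Snk]"] by blast
      then show ?thesis using pne[OF that] by (auto simp: ext_def prs_Cons)
    qed
    then show ?thesis unfolding EP_def by auto
  qed
  have injhd: "inj_on hd Ps"
  proof (rule inj_onI)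
    fix p q assume "p \<in> Ps" "q \<in> Ps" "hd p = hd q"
    show "p = q"
    proof (rule ccontr)
      assume "p \<noteq> q"
      then have "set p \<inter> set q = {}" using pdisj \<open>p \<in> Ps\<close> \<open>q \<in> Ps\<close> by blast
      moreover have "hd p \<in> set p" "hd q \<in> set q" using pne \<open>p \<in> Ps\<close> \<open>q \<in> Ps\<close> by auto
      ultimately show False using \<open>hd p = hd q\<close> by auto
    qed
  qed
  have "is_flow N E Src Snk gflow_cV gflow_cD f"
    unfolding is_flow_def
  proof (intro conjI ballI)
    fix e assume "e \<in> E" show "0 \<le> f e" by (simp add: f_def)
  next
    fix e assume "e \<in> E" show "ereal (f e) \<le> gflow_cD e" by (simp add: gflow_cD_def)
  next
    fix x assume "x \<in> N - {Src, Snk}"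
    then have xV: "x \<in> VH" by (auto simp: netN_def)
    show "inflow N E f x = outflow N E f x" using node[OF xV] inf outf by simp
    have "gflow_cV x = 1" using xV SrcV SnkV by (auto simp: gflow_cV_def)
    then show "ereal (inflow N E f x) \<le> gflow_cV x" using node[OF xV] inf by simp
  qed
  moreover have "flow_size N E Src f = real (card Ps)"
    unfolding flow_size_def outf src using card_image[OF injhd] by simp
  ultimately show ?thesis by blast
qed

end


fun unL :: "fnode \<Rightarrow> nat" where "unL (L a) = a" | "unL _ = 0"
fun unR :: "fnode \<Rightarrow> nat" where "unR (R a) = a" | "unR _ = 0"

lemma unR_map[simp]: "map unR (map R ws) = ws"
  by (induction ws) auto

lemma unR_comp[simp]: "unR \<circ> R = id"
  by (rule ext) simp

lemma walk_map_R:
  assumes "successively (\<lambda>a b. (a, b) \<in> D) ws" "set ws \<subseteq> V"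
    and "\<forall>w\<in>V. \<forall>u\<in>V. (w, u) \<in> D \<longrightarrow> (R w, R u) \<in> EH" "ws \<noteq> []"
  shows "walk EH (map R ws)"
  using assms
proof (induction ws)
  case Nil then show ?case by simp
next
  case (Cons a ws)
  show ?case
  proof (cases "ws = []")
    case True then show ?thesis by simp
  next
    case False
    then have "(a, hd ws) \<in> D" "successively (\<lambda>a b. (a, b) \<in> D) ws"
      using Cons.prems(1) by (auto simp: successively_Cons)
    moreover have "hd ws \<in> V" using False Cons.prems(2) by (cases ws) auto
    ultimately show ?thesis using Cons False by (auto simp: walk_Cons hd_map)
  qed
qed

lemma succ_set:
  "successively (\<lambda>a b. (a, b) \<in> D) ws \<Longrightarrow> D \<subseteq> V \<times> V \<Longrightarrow> ws \<noteq> [] \<Longrightarrow> hd ws \<in> V \<Longrightarrow> set ws \<subseteq> V"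
proof (induction ws)
  case Nil then show ?case by simp
next
  case (Cons a ws)
  show ?case
  proof (cases "ws = []")
    case True then show ?thesis using Cons.prems by simp
  next
    case False
    then have "(a, hd ws) \<in> D" "successively (\<lambda>a b. (a, b) \<in> D) ws"
      using Cons.prems(1) by (auto simp: successively_Cons)
    then have "hd ws \<in> V" using Cons.prems(2) by auto
    then show ?thesis using Cons False \<open>successively (\<lambda>a b. (a, b) \<in> D) ws\<close> by auto
  qed
qed

lemma walkR:
  assumes "\<forall>x u. (R x, u) \<in> EH \<longrightarrow> (\<exists>y. u = R y \<and> (x, y) \<in> D)"
  shows "walk EH q \<Longrightarrow> hd q = R w \<Longrightarrow>
    \<exists>ws. q = map R ws \<and> successively (\<lambda>a b. (a, b) \<in> D) ws \<and> ws \<noteq> []"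
proof (induction q arbitrary: w)
  case Nil then show ?case by (simp add: walk_def)
next
  case (Cons x q)
  then have x: "x = R w" by simp
  show ?case
  proof (cases "q = []")
    case True then show ?thesis using x by (intro exI[of _ "[w]"]) auto
  next
    case False
    then have "(R w, hd q) \<in> EH" "walk EH q" using Cons.prems x by (auto simp: walk_Cons)
    then obtain y where y: "hd q = R y" "(w, y) \<in> D" using assms by blast
    obtain ws where ws: "q = map R ws" "successively (\<lambda>a b. (a, b) \<in> D) ws" "ws \<noteq> []"
      using Cons.IH[OF \<open>walk EH q\<close> y(1)] by blast
    have "hd ws = y" using ws y by (cases ws) auto
    then show ?thesis using ws x y by (intro exI[of _ "w # ws"]) (auto simp: successively_Cons)
  qed
qed

lemma walkL:
  assumes "\<forall>x u. (R x, u) \<in> EH \<longrightarrow> (\<exists>y. u = R y \<and> (x, y) \<in> D)"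
    and "\<forall>u. (L a, u) \<in> EH \<longrightarrow> (\<exists>y. u = R y \<and> ((a, y) \<in> B \<or> y = a))"
    and "walk EH p" "hd p = L a"
  shows "\<exists>ws. p = L a # map R ws \<and>
    (ws \<noteq> [] \<longrightarrow> ((a, hd ws) \<in> B \<or> hd ws = a) \<and> successively (\<lambda>a b. (a, b) \<in> D) ws)"
proof -
  obtain rest where p: "p = L a # rest" using assms(3,4) by (cases p) (auto simp: walk_def)
  show ?thesis
  proof (cases "rest = []")
    case True then show ?thesis using p by (intro exI[of _ "[]"]) auto
  next
    case False
    then have "(L a, hd rest) \<in> EH" "walk EH rest" using assms(3) p by (auto simp: walk_Cons)
    then obtain y where y: "hd rest = R y" "(a, y) \<in> B \<or> y = a" using assms(2) by blast
    obtain ws where ws: "rest = map R ws" "successively (\<lambda>a b. (a, b) \<in> D) ws" "ws \<noteq> []"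
      using walkR[OF assms(1) \<open>walk EH rest\<close> y(1)] by blast
    have "hd ws = y" using ws y by (cases ws) auto
    then show ?thesis using ws y p by (intro exI[of _ ws]) auto
  qed
qed


theorem mainTheorem8:
  assumes "mixed_graph m D B"
    and "v \<in> verts m"
    and "A \<subseteq> verts m - ({v} \<union> sib B v)"
  shows "(\<exists>Y. Y \<subseteq> A \<and> HTC D B v Y) \<longleftrightarrow>
         max_flow_size (gflow_nodes m A) (gflow_edges m D B v A) Src Snk gflow_cV gflow_cD
           (real (card (pa D v)))"
proof -
  have Dv: "D \<subseteq> verts m \<times> verts m" and Bv: "B \<subseteq> verts m \<times> verts m"
    using assms(1) by (auto simp: mixed_graph_def)
  have Av: "A \<subseteq> verts m" using assms(3) by auto
  define VH where "VH = L ` A \<union> R ` verts m"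
  define EH where "EH = {(L a, R a) | a. a \<in> A} \<union>
     {(L a, R w) | a w. a \<in> A \<and> w \<in> verts m \<and> (a, w) \<in> B} \<union>
     {(R w, R u) | w u. w \<in> verts m \<and> u \<in> verts m \<and> (w, u) \<in> D}"
  define S where "S = L ` A"
  define T where "T = R ` pa D v"
  have paV: "pa D v \<subseteq> verts m" using Dv by (auto simp: pa_def)
  have finV: "finite (verts m)" by (simp add: verts_def)
  have finpa: "finite (pa D v)" using paV finV finite_subset by blast
  have finVH: "finite VH" using finV Av finite_subset by (auto simp: VH_def)
  interpret net VH EH S T
    by unfold_locales (use finVH Av paV in \<open>auto simp: VH_def EH_def S_def T_def\<close>)
  have NN: "gflow_nodes m A = N" by (auto simp: gflow_nodes_def netN_def VH_def)
  have EE: "gflow_edges m D B v A = E"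
    using paV by (auto simp: gflow_edges_def netE_def EH_def S_def T_def)
  have cT: "card T = card (pa D v)" unfolding T_def by (rule card_image) (simp add: inj_on_def)
  have sepT: "separates EH S T T"
    unfolding separates_def stpath_def
  proof (intro allI impI)
    fix p assume "walk EH p \<and> hd p \<in> S \<and> last p \<in> T"
    then have "last p \<in> set p" "last p \<in> T" using walk_nonempty[of EH p] by auto
    then show "set p \<inter> T \<noteq> {}" by blast
  qed
  have ub: "flow_size N E Src f \<le> real (card (pa D v))" if "is_flow N E Src Snk gflow_cV gflow_cD f" for f
    using flow_le_sep[OF that TV sepT] cT by simp
  have Lout: "\<forall>u. (L a, u) \<in> EH \<longrightarrow> (\<exists>y. u = R y \<and> ((a, y) \<in> B \<or> y = a))" for a
    by (auto simp: EH_def)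
  have Rout: "\<forall>x u. (R x, u) \<in> EH \<longrightarrow> (\<exists>y. u = R y \<and> (x, y) \<in> D)"
    by (auto simp: EH_def)
  have DEH: "\<forall>w\<in>verts m. \<forall>u\<in>verts m. (w, u) \<in> D \<longrightarrow> (R w, R u) \<in> EH"
    by (auto simp: EH_def)
  show ?thesis
  proof
    assume "\<exists>Y. Y \<subseteq> A \<and> HTC D B v Y"
    then obtain Y where Y: "Y \<subseteq> A" "HTC D B v Y" by blast
    then have finY: "finite Y" and cY: "card Y = card (pa D v)"
      and hs: "htsystem_no_sided_int D B Y (pa D v)" by (auto simp: HTC_def)
    then obtain \<sigma> P where bij: "bij_betw \<sigma> Y (pa D v)"
      and ht: "\<forall>x\<in>Y. half_trek D B x (\<sigma> x) (P x)"
      and dj: "\<forall>x\<in>Y. \<forall>x'\<in>Y. x \<noteq> x' \<longrightarrow> right_side (P x) \<inter> right_side (P x') = {}"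
      unfolding htsystem_no_sided_int_def by blast
    define pth where "pth y = L y # map R (snd (P y))" for y
    have st: "stpath EH S T (pth y)" if "y \<in> Y" for y
    proof -
      define ws where "ws = snd (P y)"
      have h: "ws \<noteq> []" "last ws = \<sigma> y" "successively (\<lambda>a b. (a, b) \<in> D) ws"
        "if fst (P y) then (y, hd ws) \<in> B else hd ws = y"
        using ht that by (auto simp: half_trek_def Let_def ws_def)
      have yA: "y \<in> A" using that Y(1) by blast
      have hdV: "hd ws \<in> verts m" using h(4) Bv yA Av by (auto split: if_splits)
      have "set ws \<subseteq> verts m" using succ_set[OF h(3) Dv h(1) hdV] .
      then have w1: "walk EH (map R ws)" using walk_map_R[OF h(3) _ DEH h(1)] by blast
      have "(L y, R (hd ws)) \<in> EH" using h(4) yA hdV by (auto simp: EH_def split: if_splits)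
      then have "walk EH (pth y)" using w1 h(1) by (auto simp: pth_def ws_def[symmetric] walk_Cons hd_map)
      moreover have "\<sigma> y \<in> pa D v" using bij that by (auto simp: bij_betw_def)
      ultimately show ?thesis using h(1,2) yA
        by (auto simp: stpath_def pth_def ws_def[symmetric] S_def T_def last_map)
    qed
    have pne: "\<forall>y\<in>Y. pth y \<noteq> []" by (simp add: pth_def)
    have pdj: "\<forall>y\<in>Y. \<forall>y'\<in>Y. y \<noteq> y' \<longrightarrow> set (pth y) \<inter> set (pth y') = {}"
    proof (intro ballI impI)
      fix y y' assume "y \<in> Y" "y' \<in> Y" "y \<noteq> y'"
      then have "set (snd (P y)) \<inter> set (snd (P y')) = {}" using dj by (auto simp: right_side_def)
      then show "set (pth y) \<inter> set (pth y') = {}" using \<open>y \<noteq> y'\<close> by (auto simp: pth_def)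
    qed
    from disj_family[OF pne pdj] have inj: "inj_on pth Y"
      and dj2: "\<forall>p\<in>pth ` Y. \<forall>q\<in>pth ` Y. p \<noteq> q \<longrightarrow> set p \<inter> set q = {}" by auto
    have lk: "linking EH S T (pth ` Y)" using st dj2 by (auto simp: linking_def)
    have cP: "card (pth ` Y) = card (pa D v)" using inj cY by (simp add: card_image)
    obtain Ps where Ps: "linking EH S T Ps" "card Ps = card (pa D v)" "\<forall>p\<in>Ps. distinct p" "finite Ps"
      using linking_distinct[OF lk] cP finY by auto
    obtain f where f: "is_flow N E Src Snk gflow_cV gflow_cD f" "flow_size N E Src f = real (card Ps)"
      using flow_from_paths[OF Ps(1) Ps(3) Ps(4)] by blast
    show "max_flow_size (gflow_nodes m A) (gflow_edges m D B v A) Src Snk gflow_cV gflow_cD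
           (real (card (pa D v)))"
      unfolding NN EE max_flow_size_def using f Ps(2) ub by auto
  next
    assume "max_flow_size (gflow_nodes m A) (gflow_edges m D B v A) Src Snk gflow_cV gflow_cD
           (real (card (pa D v)))"
    then obtain f where f: "is_flow N E Src Snk gflow_cV gflow_cD f" "flow_size N E Src f = real (card (pa D v))"
      unfolding NN EE max_flow_size_def by blast
    have hsep: "card (pa D v) \<le> card X" if "finite X" "separates EH S T X" for X
    proof -
      have "separates EH S T (X \<inter> VH)"
        unfolding separates_def
      proof (intro allI impI)
        fix p assume p: "stpath EH S T p"
        then have "set p \<subseteq> VH" using walk_set_sub[OF _ EHV] SV by (auto simp: stpath_def)
        moreover have "set p \<inter> X \<noteq> {}" using p that(2) by (auto simp: separates_def)
        ultimately show "set p \<inter> (X \<inter> VH) \<noteq> {}" by blast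
      qed
      then have "real (card (pa D v)) \<le> real (card (X \<inter> VH))"
        using flow_le_sep[OF f(1)] f(2) by auto
      moreover have "card (X \<inter> VH) \<le> card X" using that(1) by (intro card_mono) auto
      ultimately show ?thesis by linarith
    qed
    have finEH: "finite EH" using finVH EHV finite_subset by blast
    have finS: "finite S" using finVH SV finite_subset by blast
    obtain Ps where Ps: "linking EH S T Ps" "card Ps = card (pa D v)" "finite Ps"
      using menger[OF finEH finS hsep] by blast
    define src where "src p = unL (hd p)" for p
    define tws where "tws p = map unR (tl p)" for p
    have struct: "src p \<in> A \<and> tws p \<noteq> [] \<and> ((src p, hd (tws p)) \<in> B \<or> hd (tws p) = src p) \<and>
        successively (\<lambda>a b. (a, b) \<in> D) (tws p) \<and> last (tws p) \<in> pa D v \<and>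
        p = L (src p) # map R (tws p)" if "p \<in> Ps" for p
    proof -
      have p: "walk EH p" "hd p \<in> S" "last p \<in> T" using Ps(1) that by (auto simp: linking_def stpath_def)
      then obtain a where a: "hd p = L a" "a \<in> A" by (auto simp: S_def)
      obtain ws where ws: "p = L a # map R ws"
        "ws \<noteq> [] \<longrightarrow> ((a, hd ws) \<in> B \<or> hd ws = a) \<and> successively (\<lambda>a b. (a, b) \<in> D) ws"
        using walkL[OF Rout Lout p(1) a(1)] by blast
      have "ws \<noteq> []" using ws(1) p(3) by (auto simp: T_def)
      then have "last p = R (last ws)" using ws(1) by (simp add: last_map)
      then have "last ws \<in> pa D v" using p(3) by (auto simp: T_def)
      moreover have "src p = a" "tws p = ws" using ws(1) by (auto simp: src_def tws_def)
      ultimately show ?thesis using ws a \<open>ws \<noteq> []\<close> by auto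
    qed
    have pdisj: "set p \<inter> set q = {}" if "p \<in> Ps" "q \<in> Ps" "p \<noteq> q" for p q
      using Ps(1) that by (auto simp: linking_def)
    have injsrc: "inj_on src Ps"
    proof (rule inj_onI)
      fix p q assume pq: "p \<in> Ps" "q \<in> Ps" "src p = src q"
      show "p = q"
      proof (rule ccontr)
        assume "p \<noteq> q"
        then have "set p \<inter> set q = {}" using pdisj pq by blast
        moreover have "L (src p) \<in> set p" "L (src q) \<in> set q"
          using struct[OF pq(1)] struct[OF pq(2)] by (metis list.set_intros(1))+
        ultimately show False using pq(3) by auto
      qed
    qed
    define Y where "Y = src ` Ps"
    have YA: "Y \<subseteq> A" using struct by (auto simp: Y_def)
    have cY: "card Y = card (pa D v)" using injsrc Ps(2) by (simp add: Y_def card_image)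
    have finY: "finite Y" using Ps(3) by (simp add: Y_def)
    define pth where "pth y = inv_into Ps src y" for y
    have pth: "pth y \<in> Ps" "src (pth y) = y" if "y \<in> Y" for y
      using that unfolding pth_def Y_def by (auto intro: inv_into_into f_inv_into_f)
    define \<sigma> where "\<sigma> y = last (tws (pth y))" for y
    define Pm where "Pm y = (hd (tws (pth y)) \<noteq> y, tws (pth y))" for y
    have ht: "half_trek D B y (\<sigma> y) (Pm y)" if "y \<in> Y" for y
      using struct[OF pth(1)[OF that]] pth(2)[OF that]
      by (auto simp: half_trek_def Let_def \<sigma>_def Pm_def)
    have rs: "R ` right_side (Pm y) \<subseteq> set (pth y)" if "y \<in> Y" for y
    proof -
      have "pth y = L y # map R (tws (pth y))" using struct[OF pth(1)[OF that]] pth(2)[OF that] by simp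
      then show ?thesis by (auto simp: right_side_def Pm_def) (metis image_eqI list.set_intros(2) list.set_map)
    qed
    have pthne: "pth y \<noteq> pth y'" if "y \<in> Y" "y' \<in> Y" "y \<noteq> y'" for y y'
      using pth that by metis
    have rsd: "right_side (Pm y) \<inter> right_side (Pm y') = {}" if "y \<in> Y" "y' \<in> Y" "y \<noteq> y'" for y y'
    proof -
      have "set (pth y) \<inter> set (pth y') = {}"
        using pdisj[OF pth(1)[OF that(1)] pth(1)[OF that(2)] pthne[OF that]] .
      then have "R ` right_side (Pm y) \<inter> R ` right_side (Pm y') = {}"
        using rs[OF that(1)] rs[OF that(2)] by blast
      then show ?thesis by auto
    qed
    have sig: "R (\<sigma> y) \<in> R ` right_side (Pm y)" if "y \<in> Y" for y
      using struct[OF pth(1)[OF that]] by (auto simp: \<sigma>_def right_side_def Pm_def)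
    have injs: "inj_on \<sigma> Y"
    proof (rule inj_onI)
      fix y y' assume yy: "y \<in> Y" "y' \<in> Y" "\<sigma> y = \<sigma> y'"
      show "y = y'"
      proof (rule ccontr)
        assume "y \<noteq> y'"
        then have "right_side (Pm y) \<inter> right_side (Pm y') = {}" using rsd yy by blast
        moreover have "\<sigma> y \<in> right_side (Pm y)" "\<sigma> y' \<in> right_side (Pm y')"
          using sig yy by blast+
        ultimately show False using yy(3) by auto
      qed
    qed
    have sub: "\<sigma> ` Y \<subseteq> pa D v" using struct pth by (auto simp: \<sigma>_def)
    have "card (\<sigma> ` Y) = card (pa D v)" using injs cY by (simp add: card_image)
    then have "\<sigma> ` Y = pa D v" using card_subset_eq[OF finpa sub] by blast
    then have bij: "bij_betw \<sigma> Y (pa D v)" using injs by (simp add: bij_betw_def)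
    have "htsystem_no_sided_int D B Y (pa D v)"
      unfolding htsystem_no_sided_int_def
      by (rule exI[of _ \<sigma>], rule exI[of _ Pm]) (use bij ht rsd in \<open>auto simp: left_side_def\<close>)
    moreover have "Y \<inter> ({v} \<union> sib B v) = {}" using YA assms(3) by auto
    ultimately have "HTC D B v Y" using finY cY by (simp add: HTC_def)
    then show "\<exists>Y. Y \<subseteq> A \<and> HTC D B v Y" using YA by blast
  qed
qed

end
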